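(* Let $S$ be an idempotent semiring. The following are equivalent: (1) $\mathcal{L}^{\bullet}$ is the least distributive lattice congruence on $S$; (2) $\mathcal{D}^{+}\subseteq\mathcal{L}^{\bullet}$ and $S$ satisfies $x+xy+x\approx x$; (3) $S$ satisfies $x+xyx+x\approx x$ and $\mathcal{R}^{\bullet}\subseteq\mathcal{D}^{+}\subseteq\mathcal{L}^{\bullet}$; (4) $\leq^{l}_{\cdot}\ \subseteq\ \leq_{+}$ on $S$; (5) $S$ satisfies the identity $x\approx xy+x+xy$; (6) $S$ satisfies the identity $x\approx x(y+x+y)$.
   Context: An idempotent semiring is an algebra $(S,+,\cdot)$ with two binary operations such that $(S,+)$ and $(S,\cdot)$ are bands (associative, with $x+x=x$ and $xx=x$), and both distributive laws $x(y+z)=xy+xz$ and $(x+y)z=xz+yz$ hold; addition is not assumed commutative. A distributive lattice congruence on $S$ is a congruence $\rho$ such that $S/\rho$ satisfies $x+y\approx y+x$, $xy\approx yx$ and $x+xy\approx x$. Green's relations: $a\,\mathcal{L}^{\bullet}\,b$ iff $ab=a$ and $ba=b$; $a\,\mathcal{R}^{\bullet}\,b$ iff $ab=b$ and $ba=a$; $a\,\mathcal{D}^{+}\,b$ iff $a+b+a=a$ and $b+a+b=b$. Orders: $a\leq^{l}_{\cdot} b$ iff $a=ba$; $a\leq_{+} b$ iff $b=a+b$ and $b=b+a$. *)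

theory Defs
  imports Main
begin

text \<open>An idempotent semiring on the whole type 'a, with addition pl and multiplication ml
  (addition not assumed commutative).\<close>

definition idem_semiring :: "('a \<Rightarrow> 'a \<Rightarrow> 'a) \<Rightarrow> ('a \<Rightarrow> 'a \<Rightarrow> 'a) \<Rightarrow> bool" where
  "idem_semiring pl ml \<longleftrightarrow>
     (\<forall>x y z. pl (pl x y) z = pl x (pl y z)) \<and> (\<forall>x. pl x x = x) \<and>
     (\<forall>x y z. ml (ml x y) z = ml x (ml y z)) \<and> (\<forall>x. ml x x = x) \<and>
     (\<forall>x y z. ml x (pl y z) = pl (ml x y) (ml x z)) \<and>
     (\<forall>x y z. ml (pl x y) z = pl (ml x z) (ml y z))"

definition sr_congruence :: "('a \<Rightarrow> 'a \<Rightarrow> 'a) \<Rightarrow> ('a \<Rightarrow> 'a \<Rightarrow> 'a) \<Rightarrow> ('a \<times> 'a) set \<Rightarrow> bool" where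
  "sr_congruence pl ml \<rho> \<longleftrightarrow> equiv UNIV \<rho> \<and>
     (\<forall>a b c d. (a, b) \<in> \<rho> \<longrightarrow> (c, d) \<in> \<rho> \<longrightarrow>
        (pl a c, pl b d) \<in> \<rho> \<and> (ml a c, ml b d) \<in> \<rho>)"

definition dl_congruence :: "('a \<Rightarrow> 'a \<Rightarrow> 'a) \<Rightarrow> ('a \<Rightarrow> 'a \<Rightarrow> 'a) \<Rightarrow> ('a \<times> 'a) set \<Rightarrow> bool" where
  "dl_congruence pl ml \<rho> \<longleftrightarrow> sr_congruence pl ml \<rho> \<and>
     (\<forall>x y. (pl x y, pl y x) \<in> \<rho>) \<and> (\<forall>x y. (ml x y, ml y x) \<in> \<rho>) \<and>
     (\<forall>x y. (pl x (ml x y), x) \<in> \<rho>)"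

definition least_dl_congruence :: "('a \<Rightarrow> 'a \<Rightarrow> 'a) \<Rightarrow> ('a \<Rightarrow> 'a \<Rightarrow> 'a) \<Rightarrow> ('a \<times> 'a) set \<Rightarrow> bool" where
  "least_dl_congruence pl ml \<rho> \<longleftrightarrow> dl_congruence pl ml \<rho> \<and>
     (\<forall>\<sigma>. dl_congruence pl ml \<sigma> \<longrightarrow> \<rho> \<subseteq> \<sigma>)"

definition Lmul :: "('a \<Rightarrow> 'a \<Rightarrow> 'a) \<Rightarrow> ('a \<times> 'a) set" where
  "Lmul ml = {(a, b). ml a b = a \<and> ml b a = b}"

definition Rmul :: "('a \<Rightarrow> 'a \<Rightarrow> 'a) \<Rightarrow> ('a \<times> 'a) set" where
  "Rmul ml = {(a, b). ml a b = b \<and> ml b a = a}"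

definition Dplus :: "('a \<Rightarrow> 'a \<Rightarrow> 'a) \<Rightarrow> ('a \<times> 'a) set" where
  "Dplus pl = {(a, b). pl (pl a b) a = a \<and> pl (pl b a) b = b}"

definition leq_lmul :: "('a \<Rightarrow> 'a \<Rightarrow> 'a) \<Rightarrow> ('a \<times> 'a) set" where
  "leq_lmul ml = {(a, b). a = ml b a}"

definition leq_plus :: "('a \<Rightarrow> 'a \<Rightarrow> 'a) \<Rightarrow> ('a \<times> 'a) set" where
  "leq_plus pl = {(a, b). b = pl a b \<and> b = pl b a}"

end

theory Submission
  imports Defs
begin

locale isr =
  fixes pl :: "'a \<Rightarrow> 'a \<Rightarrow> 'a" (infixr "\<oplus>" 65)
    and ml :: "'a \<Rightarrow> 'a \<Rightarrow> 'a" (infixr "\<odot>" 70)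
  assumes idem: "idem_semiring pl ml"
begin

lemma pa[simp]: "(x \<oplus> y) \<oplus> z = x \<oplus> (y \<oplus> z)" using idem unfolding idem_semiring_def by blast
lemma pi[simp]: "x \<oplus> x = x" using idem unfolding idem_semiring_def by blast
lemma ma[simp]: "(x \<odot> y) \<odot> z = x \<odot> (y \<odot> z)" using idem unfolding idem_semiring_def by blast
lemma mi[simp]: "x \<odot> x = x" using idem unfolding idem_semiring_def by blast
lemma dl[simp]: "x \<odot> (y \<oplus> z) = x \<odot> y \<oplus> x \<odot> z" using idem unfolding idem_semiring_def by blast
lemma dr[simp]: "(x \<oplus> y) \<odot> z = x \<odot> z \<oplus> y \<odot> z" using idem unfolding idem_semiring_def by blast
lemma pi2[simp]: "x \<oplus> (x \<oplus> y) = x \<oplus> y" by (metis pa pi)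
lemma mi2[simp]: "x \<odot> (x \<odot> y) = x \<odot> y" by (metis ma mi)
lemma pb[simp]: "x \<oplus> y \<oplus> x \<oplus> y \<oplus> z = x \<oplus> y \<oplus> z" by (metis pa pi)
lemma pb2[simp]: "x \<oplus> y \<oplus> x \<oplus> y = x \<oplus> y" by (metis pa pi)

lemma band_eq:
  assumes "a = b \<oplus> a \<oplus> b" "b = a \<oplus> b \<oplus> a"
  shows "a = b"
proof -
  have "a = (a \<oplus> b \<oplus> a) \<oplus> a \<oplus> (a \<oplus> b \<oplus> a)" using assms by simp
  also have "\<dots> = (a \<oplus> b) \<oplus> (a \<oplus> b) \<oplus> a" by simp
  also have "\<dots> = a \<oplus> b \<oplus> a" by (simp del: pa add: pa[symmetric])
  finally show ?thesis using assms by simp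
qed

definition "P5 \<longleftrightarrow> (\<forall>x y. x = x \<odot> y \<oplus> x \<oplus> x \<odot> y)"

lemma P5_leq:
  assumes "P5" "b \<odot> a = a"
  shows "b = a \<oplus> b" "b = b \<oplus> a"
proof -
  have "b = b \<odot> a \<oplus> b \<oplus> b \<odot> a" using assms unfolding P5_def by blast
  then have 1: "b = a \<oplus> b \<oplus> a" unfolding assms(2) .
  have "a \<oplus> b = a \<oplus> (a \<oplus> b \<oplus> a)" using arg_cong[OF 1, of "\<lambda>t. a \<oplus> t"] .
  also have "\<dots> = a \<oplus> b \<oplus> a" by simp
  also have "\<dots> = b" using 1[symmetric] by simp
  finally show "b = a \<oplus> b" by simp
  have "b \<oplus> a = (a \<oplus> b \<oplus> a) \<oplus> a" using arg_cong[OF 1, of "\<lambda>t. t \<oplus> a"] .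
  also have "\<dots> = a \<oplus> b \<oplus> a" by simp
  also have "\<dots> = b" using 1[symmetric] by simp
  finally show "b = b \<oplus> a" by simp
qed

lemma P5_h1: "P5 \<Longrightarrow> x \<oplus> x \<odot> y = x" using P5_leq[of x "x \<odot> y"] by simp
lemma P5_h2: "P5 \<Longrightarrow> x \<odot> y \<oplus> x = x" using P5_leq[of x "x \<odot> y"] by simp

lemma mb[simp]: "x \<odot> y \<odot> x \<odot> y = x \<odot> y" by (metis ma mi)
lemma mb2[simp]: "x \<odot> y \<odot> x \<odot> y \<odot> z = x \<odot> y \<odot> z" by (metis ma mi)

lemma P5_LR: assumes "P5" shows "x \<odot> y \<odot> x = x \<odot> y"
proof (rule band_eq)
  have i: "x \<odot> y \<odot> x = ((x \<odot> y \<odot> x) \<odot> y) \<oplus> (x \<odot> y \<odot> x) \<oplus> ((x \<odot> y \<odot> x) \<odot> y)"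
    using assms unfolding P5_def by blast
  have "(x \<odot> y \<odot> x) \<odot> y = x \<odot> y" by simp
  then show "x \<odot> y \<odot> x = x \<odot> y \<oplus> x \<odot> y \<odot> x \<oplus> x \<odot> y" using i by simp
  have "x \<odot> y = ((x \<odot> y) \<odot> x) \<oplus> (x \<odot> y) \<oplus> ((x \<odot> y) \<odot> x)"
    using assms unfolding P5_def by blast
  then show "x \<odot> y = x \<odot> y \<odot> x \<oplus> x \<odot> y \<oplus> x \<odot> y \<odot> x" by simp
qed

lemma Lcomp:
  assumes LR2: "\<And>x y z. x \<odot> y \<odot> x \<odot> z = x \<odot> y \<odot> z" and ab: "a \<odot> b = a" and cd: "c \<odot> d = c"
  shows "a \<odot> c \<odot> b \<odot> d = a \<odot> c"
proof -
  have "a \<odot> c \<odot> b \<odot> d = (a \<odot> b) \<odot> c \<odot> b \<odot> d" by (simp only: ab)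
  also have "\<dots> = a \<odot> b \<odot> c \<odot> d" by (simp add: LR2)
  also have "\<dots> = a \<odot> b \<odot> c" by (simp only: cd)
  also have "\<dots> = (a \<odot> b) \<odot> c" by simp
  also have "\<dots> = a \<odot> c" by (simp only: ab)
  finally show ?thesis .
qed

lemma P5_imp_1: assumes "P5" shows "least_dl_congruence pl ml (Lmul ml)"
proof -
  note LR = P5_LR[OF assms] and h1 = P5_h1[OF assms] and h2 = P5_h2[OF assms]
  have LR2: "x \<odot> y \<odot> x \<odot> z = x \<odot> y \<odot> z" for x y z
  proof -
    have "x \<odot> y \<odot> x \<odot> z = (x \<odot> y \<odot> x) \<odot> z" by simp
    also have "\<dots> = (x \<odot> y) \<odot> z" by (simp only: LR)
    also have "\<dots> = x \<odot> y \<odot> z" by simp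
    finally show ?thesis .
  qed
  have tr: "(a, c) \<in> Lmul ml" if "(a,b) \<in> Lmul ml" "(b,c) \<in> Lmul ml" for a b c
  proof -
    have ab: "a \<odot> b = a" "b \<odot> a = b" "b \<odot> c = b" "c \<odot> b = c" using that unfolding Lmul_def by blast+
    have "a \<odot> c = (a \<odot> b) \<odot> c" by (simp only: ab)
    also have "\<dots> = a \<odot> b" by (simp only: ma ab(3))
    also have "\<dots> = a" by (rule ab(1))
    finally have 1: "a \<odot> c = a" .
    have "c \<odot> a = (c \<odot> b) \<odot> a" by (simp only: ab)
    also have "\<dots> = c \<odot> b" by (simp only: ma ab(2))
    also have "\<dots> = c" by (rule ab(4))
    finally have 2: "c \<odot> a = c" .
    show ?thesis using 1 2 unfolding Lmul_def by simp
  qed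
  have eq: "equiv UNIV (Lmul ml)"
  proof (rule equivI)
    show "Lmul ml \<subseteq> UNIV \<times> UNIV" by simp
    show "refl_on UNIV (Lmul ml)" by (rule reflI) (simp add: Lmul_def)
    show "sym (Lmul ml)" by (rule symI) (unfold Lmul_def, blast)
    show "trans (Lmul ml)" by (rule transI) (rule tr)
  qed
  have cm: "(a \<odot> c, b \<odot> d) \<in> Lmul ml" if "(a,b) \<in> Lmul ml" "(c,d) \<in> Lmul ml" for a b c d
  proof -
    have f: "a \<odot> b = a" "b \<odot> a = b" "c \<odot> d = c" "d \<odot> c = d" using that unfolding Lmul_def by blast+
    have "a \<odot> c \<odot> b \<odot> d = a \<odot> c" by (rule Lcomp[OF LR2 f(1) f(3)])
    moreover have "b \<odot> d \<odot> a \<odot> c = b \<odot> d" by (rule Lcomp[OF LR2 f(2) f(4)])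
    ultimately show ?thesis unfolding Lmul_def by simp
  qed
  have cp: "(a \<oplus> c, b \<oplus> d) \<in> Lmul ml" if "(a,b) \<in> Lmul ml" "(c,d) \<in> Lmul ml" for a b c d
  proof -
    have 1: "(a \<oplus> c) \<odot> (b \<oplus> d) = a \<oplus> c" if "a \<odot> b = a" "c \<odot> d = c" for a b c d
    proof -
      have "(a \<oplus> c) \<odot> (b \<oplus> d) = a \<odot> (b \<oplus> d) \<oplus> c \<odot> (b \<oplus> d)" by (simp only: dr)
      also have "\<dots> = a \<odot> b \<oplus> a \<odot> d \<oplus> c \<odot> b \<oplus> c \<odot> d" by (simp only: dl pa)
      also have "\<dots> = a \<oplus> a \<odot> d \<oplus> c \<odot> b \<oplus> c" using that by simp
      also have "\<dots> = (a \<oplus> a \<odot> d) \<oplus> (c \<odot> b \<oplus> c)" by (simp only: pa)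
      also have "\<dots> = a \<oplus> c" by (simp only: h1 h2)
      finally show ?thesis .
    qed
    have f: "a \<odot> b = a" "b \<odot> a = b" "c \<odot> d = c" "d \<odot> c = d" using that unfolding Lmul_def by blast+
    have e1: "(a \<oplus> c) \<odot> (b \<oplus> d) = a \<oplus> c" by (rule 1[OF f(1) f(3)])
    have e2: "(b \<oplus> d) \<odot> (a \<oplus> c) = b \<oplus> d" by (rule 1[OF f(2) f(4)])
    show ?thesis unfolding Lmul_def using e1 e2 by blast
  qed
  have dlc: "dl_congruence pl ml (Lmul ml)"
    unfolding dl_congruence_def sr_congruence_def
  proof (intro conjI allI impI)
    show "equiv UNIV (Lmul ml)" by (rule eq)
  next
    fix a b c d assume "(a,b) \<in> Lmul ml" "(c,d) \<in> Lmul ml"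
    then show "(a \<oplus> c, b \<oplus> d) \<in> Lmul ml" "(a \<odot> c, b \<odot> d) \<in> Lmul ml" using cp cm by auto
  next
    fix x y
    have sw: "(x \<oplus> y) \<odot> (y \<oplus> x) = x \<oplus> y" for x y
    proof -
      have "(x \<oplus> y) \<odot> (y \<oplus> x) = x \<odot> (y \<oplus> x) \<oplus> y \<odot> (y \<oplus> x)" by (simp only: dr)
      also have "\<dots> = (x \<odot> y \<oplus> x) \<oplus> (y \<oplus> y \<odot> x)" by (simp only: dl pa mi)
      also have "\<dots> = x \<oplus> y" by (simp only: h1 h2)
      finally show ?thesis .
    qed
    show "(x \<oplus> y, y \<oplus> x) \<in> Lmul ml" unfolding Lmul_def using sw[of x y] sw[of y x] by blast
    show "(x \<odot> y, y \<odot> x) \<in> Lmul ml" unfolding Lmul_def using LR by simp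
    show "(x \<oplus> x \<odot> y, x) \<in> Lmul ml" unfolding Lmul_def using h1 by simp
  qed
  have least: "Lmul ml \<subseteq> \<sigma>" if "dl_congruence pl ml \<sigma>" for \<sigma>
  proof
    fix p assume "p \<in> Lmul ml"
    then obtain a b where p: "p = (a,b)" "a \<odot> b = a" "b \<odot> a = b" unfolding Lmul_def by auto
    have "(a \<odot> b, b \<odot> a) \<in> \<sigma>" using that unfolding dl_congruence_def by blast
    then show "p \<in> \<sigma>" using p by simp
  qed
  show ?thesis unfolding least_dl_congruence_def using dlc least by blast
qed

lemma imp1_P5: assumes "least_dl_congruence pl ml (Lmul ml)" shows "P5"
proof -
  have d: "dl_congruence pl ml (Lmul ml)" using assms unfolding least_dl_congruence_def by blast
  have h1: "x \<oplus> x \<odot> y = x" for x y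
    using d unfolding dl_congruence_def Lmul_def by auto
  have "((x \<oplus> x \<odot> y) \<odot> (x \<odot> y \<oplus> x)) = x \<oplus> x \<odot> y" for x y
    using d unfolding dl_congruence_def Lmul_def by blast
  then have h2: "x \<odot> y \<oplus> x = x" for x y using h1 by simp
  show ?thesis unfolding P5_def using h1 h2 by simp
qed

definition "C2 \<longleftrightarrow> Dplus pl \<subseteq> Lmul ml \<and> (\<forall>x y. x \<oplus> x \<odot> y \<oplus> x = x)"
definition "C3 \<longleftrightarrow> (\<forall>x y. x \<oplus> x \<odot> y \<odot> x \<oplus> x = x) \<and> Rmul ml \<subseteq> Dplus pl \<and> Dplus pl \<subseteq> Lmul ml"

lemma P5_D: assumes "P5" "(a,b) \<in> Dplus pl" shows "(a,b) \<in> Lmul ml"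
proof -
  have a: "a \<oplus> b \<oplus> a = a" "b \<oplus> a \<oplus> b = b" using assms(2) unfolding Dplus_def by auto
  have "a \<odot> b = a \<odot> (b \<oplus> a \<oplus> b)" using a by simp
  also have "\<dots> = a" by (simp add: P5_def[THEN iffD1, OF assms(1), rule_format, symmetric])
  finally have 1: "a \<odot> b = a" .
  have "b \<odot> a = b \<odot> (a \<oplus> b \<oplus> a)" using a by simp
  also have "\<dots> = b" by (simp add: P5_def[THEN iffD1, OF assms(1), rule_format, symmetric])
  finally show ?thesis using 1 unfolding Lmul_def by simp
qed

lemma P5_R: assumes "P5" "(a,b) \<in> Rmul ml" shows "(a,b) \<in> Dplus pl"
proof -
  have r: "a \<odot> b = b" "b \<odot> a = a" using assms(2) unfolding Rmul_def by auto
  have "a = a \<odot> b \<oplus> a \<oplus> a \<odot> b" using assms(1) unfolding P5_def by blast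
  then have "a = b \<oplus> a \<oplus> b" unfolding r .
  moreover have "b = b \<odot> a \<oplus> b \<oplus> b \<odot> a" using assms(1) unfolding P5_def by blast
  then have "b = a \<oplus> b \<oplus> a" unfolding r .
  ultimately have "a = b" by (rule band_eq)
  then show ?thesis unfolding Dplus_def by simp
qed

lemma P5_C2: "P5 \<Longrightarrow> C2" unfolding C2_def using P5_D P5_h2 by auto
lemma P5_C3: assumes "P5" shows "C3"
proof -
  have "x \<oplus> x \<odot> y \<odot> x \<oplus> x = x" for x y using P5_LR[OF assms] P5_h2[OF assms] by simp
  then show ?thesis unfolding C3_def using P5_D[OF assms] P5_R[OF assms] by auto
qed

lemma C2_P5: assumes "C2" shows "P5"
proof -
  have D: "Dplus pl \<subseteq> Lmul ml" and h: "\<And>x y. x \<oplus> x \<odot> y \<oplus> x = x" using assms unfolding C2_def by auto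
  have h1: "x \<oplus> x \<odot> y = x" for x y
  proof -
    have "(x, x \<oplus> x \<odot> y) \<in> Dplus pl" unfolding Dplus_def using h[of x y] by simp
    then have "x \<odot> (x \<oplus> x \<odot> y) = x" using D unfolding Lmul_def by auto
    then show ?thesis by simp
  qed
  have h2: "x \<odot> y \<oplus> x = x" for x y
  proof -
    have "(x, x \<odot> y \<oplus> x) \<in> Dplus pl" unfolding Dplus_def using h[of x y] by simp
    then have "x \<odot> (x \<odot> y \<oplus> x) = x" using D unfolding Lmul_def by auto
    then show ?thesis by simp
  qed
  show ?thesis unfolding P5_def using h1 h2 by simp
qed

lemma C3_P5: assumes "C3" shows "P5"
proof -
  have D: "Dplus pl \<subseteq> Lmul ml" and R: "Rmul ml \<subseteq> Dplus pl"
    and h: "\<And>x y. x \<oplus> x \<odot> y \<odot> x \<oplus> x = x" using assms unfolding C3_def by auto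
  have LR: "x \<odot> y \<odot> x = x \<odot> y" for x y
  proof -
    have "(x \<odot> y, x \<odot> y \<odot> x) \<in> Rmul ml" unfolding Rmul_def by simp
    then have "(x \<odot> y) \<odot> (x \<odot> y \<odot> x) = x \<odot> y" using D R unfolding Lmul_def by auto
    then show ?thesis by simp
  qed
  have C2: "x \<oplus> x \<odot> y \<oplus> x = x" for x y using h[of x y] by (simp add: LR)
  show ?thesis using C2_P5 D C2 unfolding C2_def by auto
qed

lemma P5_C4: "P5 \<Longrightarrow> leq_lmul ml \<subseteq> leq_plus pl"
  unfolding leq_lmul_def leq_plus_def using P5_leq by auto

lemma C4_P5: assumes "leq_lmul ml \<subseteq> leq_plus pl" shows P5
proof -
  have "(x \<odot> y, x) \<in> leq_lmul ml" for x y unfolding leq_lmul_def by simp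
  then have "x = x \<odot> y \<oplus> x \<and> x = x \<oplus> x \<odot> y" for x y using assms unfolding leq_plus_def by auto
  then show ?thesis unfolding P5_def by simp
qed

lemma P5_C6: "P5 \<longleftrightarrow> (\<forall>x y. x = x \<odot> ((y \<oplus> x) \<oplus> y))" unfolding P5_def by simp

end

theorem theorem3p3:
  fixes pl ml :: "'a \<Rightarrow> 'a \<Rightarrow> 'a"
  assumes "idem_semiring pl ml"
  shows
   "(least_dl_congruence pl ml (Lmul ml) \<longleftrightarrow>
       (Dplus pl \<subseteq> Lmul ml \<and> (\<forall>x y. pl (pl x (ml x y)) x = x))) \<and>
    ((Dplus pl \<subseteq> Lmul ml \<and> (\<forall>x y. pl (pl x (ml x y)) x = x)) \<longleftrightarrow>
       ((\<forall>x y. pl (pl x (ml (ml x y) x)) x = x) \<and> Rmul ml \<subseteq> Dplus pl \<and> Dplus pl \<subseteq> Lmul ml)) \<and>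
    (((\<forall>x y. pl (pl x (ml (ml x y) x)) x = x) \<and> Rmul ml \<subseteq> Dplus pl \<and> Dplus pl \<subseteq> Lmul ml) \<longleftrightarrow>
       leq_lmul ml \<subseteq> leq_plus pl) \<and>
    (leq_lmul ml \<subseteq> leq_plus pl \<longleftrightarrow> (\<forall>x y. x = pl (pl (ml x y) x) (ml x y))) \<and>
    ((\<forall>x y. x = pl (pl (ml x y) x) (ml x y)) \<longleftrightarrow> (\<forall>x y. x = ml x (pl (pl y x) y)))"
proof -
  interpret isr pl ml by standard (rule assms)
  have c2: "C2 \<longleftrightarrow> (Dplus pl \<subseteq> Lmul ml \<and> (\<forall>x y. pl (pl x (ml x y)) x = x))"
    unfolding C2_def by simp
  have c3: "C3 \<longleftrightarrow> ((\<forall>x y. pl (pl x (ml (ml x y) x)) x = x) \<and> Rmul ml \<subseteq> Dplus pl \<and> Dplus pl \<subseteq> Lmul ml)"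
    unfolding C3_def by simp
  have c5: "P5 \<longleftrightarrow> (\<forall>x y. x = pl (pl (ml x y) x) (ml x y))" unfolding P5_def by simp
  have c6: "P5 \<longleftrightarrow> (\<forall>x y. x = ml x (pl (pl y x) y))" using P5_C6 by simp
  have e1: "least_dl_congruence pl ml (Lmul ml) \<longleftrightarrow> P5" using P5_imp_1 imp1_P5 by blast
  have e2: "C2 \<longleftrightarrow> P5" using P5_C2 C2_P5 by blast
  have e3: "C3 \<longleftrightarrow> P5" using P5_C3 C3_P5 by blast
  have e4: "leq_lmul ml \<subseteq> leq_plus pl \<longleftrightarrow> P5" using P5_C4 C4_P5 by blast
  show ?thesis using c2 c3 c5 c6 e1 e2 e3 e4 by blast
qed

end
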